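(* Let $\alpha\in[0,1)$, $c_{\mathrm{TX}}>0$, $\phi>0$, $\theta=\phi/c_{\mathrm{TX}}$, integers $N_S\geq B\geq 1$, $\lambda_{\mathrm{th}}=(1+\sqrt{\theta})^{-2}$, $v_{\mathrm{th}}(\lambda,0)=\sqrt{\lambda\theta}+\frac{\lambda}{2}+\sqrt{\lambda}\sqrt{\sqrt{\lambda\theta}+\frac{\lambda}{4}}$, and for $j\geq0$ let $\eta_j(\lambda)=1-\alpha^{j}(1-\sqrt{\lambda\theta})-v_{\mathrm{th}}(\lambda,0)$ and let $\lambda_j^*$ be the unique solution in $[0,\lambda_{\mathrm{th}}]$ of $\eta_j(\lambda)=0$. For $\lambda\in(0,\lambda_{\mathrm{th}})$ and $p_0\in[0,1]$, consider the process $V_0=1$ and for $k\geq0$: if $V_k>v_{\mathrm{th}}(\lambda,0)$ set $t_k=1$, $S_{M,k}=\frac{1}{\sqrt{\lambda\theta}}-\frac{1}{V_k}$; if $V_k<v_{\mathrm{th}}(\lambda,0)$ set $t_k=S_{M,k}=0$; if $V_k=v_{\mathrm{th}}(\lambda,0)$ set $t_k=1$, $S_{M,k}=\frac{1}{\sqrt{\lambda\theta}}-\frac{1}{V_k}$ with probability $p_0$ (independently over time) and $t_k=S_{M,k}=0$ otherwise; then $\hat V_k=\frac{V_k}{1+V_kt_kS_{M,k}}$ and $V_{k+1}=1-\alpha(1-\hat V_k)$. Let $\bar M_{MP}^{\lambda,p_0}=\lim_{T\to\infty}\mathbb E\left[\frac{1}{T+1}\sum_{k=0}^T\hat V_k\right]$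 and $\bar C_{MP}^{\lambda,p_0}=\lim_{T\to\infty}\mathbb E\left[\frac{1}{T+1}\sum_{k=0}^T\frac{1}{N_S}t_k(c_{\mathrm{TX}}+\phi S_{M,k})\right]$. Let $J\geq1$ be an integer, $\lambda\in(\lambda_{J-1}^*,\lambda_J^*]$ and $\hat V^*=\sqrt{\lambda\theta}$. (i) If $\lambda=\lambda_J^*$, then $$\bar M_{MP}^{\lambda,p_0}=1-\frac{\{1-\alpha^{J}[1-(1-\alpha)(1-p_0)]\}(1-\hat V^* )}{(J+1-p_0)(1-\alpha)},$$ $$\bar C_{MP}^{\lambda,p_0}=\frac{1}{N_S(J+1-p_0)}\left[c_{\mathrm{TX}}+\phi\frac{1-\hat V^*}{\hat V^*}\left(p_0\frac{1-\alpha^{J}}{1-\alpha^{J}(1-\hat V^* )}+(1-p_0)\frac{1-\alpha^{J+1}}{1-\alpha^{J+1}(1-\hat V^* )}\right)\right].$$ (ii) Otherwise ($\lambda\in(\lambda_{J-1}^*,\lambda_J^* )$), writing $\bar M_{MP}^{\lambda,1},\bar C_{MP}^{\lambda,1}$ for the (then $p_0$-independent) quantities, $$\bar M_{MP}^{\lambda,1}=1-\frac{(1-\alpha^{J})(1-\hat V^* )}{J(1-\alpha)},\qquad \bar C_{MP}^{\lambda,1}=\frac{1}{N_S J}\left[c_{\mathrm{TX}}+\phi\frac{1}{\hat V^*}\frac{(1-\alpha^{J})(1-\hat V^* )}{1-\alpha^{J}(1-\hat V^* )}\right].$$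
   Context: This is the myopic policy of the coordinated scheme with infinite ambient SNR: the fusion center tracks $X_{k+1}=\sqrt\alpha X_k+Z_k$ with unit stationary variance; $V_k$ is the prior variance, $\hat V_k$ the posterior variance (MSE) at slot $k$; at most one sensor (out of $N_S$) is activated, with local measurement SNR $S_{M,k}$ and cost $c_{\mathrm{TX}}+\phi S_{M,k}$; the per-sensor cost averages the network cost over the $N_S$ sensors. *)

theory Defs
  imports "HOL-Probability.Probability"
begin

definition vth :: "real \<Rightarrow> real \<Rightarrow> real" where
  "vth \<theta> lam = sqrt (lam * \<theta>) + lam / 2 + sqrt lam * sqrt (sqrt (lam * \<theta>) + lam / 4)"

definition lam_th :: "real \<Rightarrow> real" where
  "lam_th \<theta> = 1 / (1 + sqrt \<theta>)^2"

definition eta :: "real \<Rightarrow> real \<Rightarrow> nat \<Rightarrow> real \<Rightarrow> real" where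
  "eta \<alpha> \<theta> j lam = 1 - \<alpha>^j * (1 - sqrt (lam * \<theta>)) - vth \<theta> lam"

definition lam_star :: "real \<Rightarrow> real \<Rightarrow> nat \<Rightarrow> real" where
  "lam_star \<alpha> \<theta> j = (THE l. l \<in> {0..lam_th \<theta>} \<and> eta \<alpha> \<theta> j l = 0)"

text \<open>Activation decision at prior variance V; b is the (Bernoulli p0) coin used at the threshold.\<close>
definition active :: "real \<Rightarrow> real \<Rightarrow> real \<Rightarrow> bool \<Rightarrow> bool" where
  "active \<theta> lam V b = (V > vth \<theta> lam \<or> (V = vth \<theta> lam \<and> b))"

definition tk :: "real \<Rightarrow> real \<Rightarrow> real \<Rightarrow> bool \<Rightarrow> real" where
  "tk \<theta> lam V b = (if active \<theta> lam V b then 1 else 0)"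

definition SM :: "real \<Rightarrow> real \<Rightarrow> real \<Rightarrow> bool \<Rightarrow> real" where
  "SM \<theta> lam V b = (if active \<theta> lam V b then 1 / sqrt (lam * \<theta>) - 1 / V else 0)"

definition Vpost :: "real \<Rightarrow> real \<Rightarrow> real \<Rightarrow> bool \<Rightarrow> real" where
  "Vpost \<theta> lam V b = V / (1 + V * tk \<theta> lam V b * SM \<theta> lam V b)"

fun Vprior :: "real \<Rightarrow> real \<Rightarrow> real \<Rightarrow> (nat \<Rightarrow> bool) \<Rightarrow> nat \<Rightarrow> real" where
  "Vprior \<alpha> \<theta> lam b 0 = 1"
| "Vprior \<alpha> \<theta> lam b (Suc k) =
     1 - \<alpha> * (1 - Vpost \<theta> lam (Vprior \<alpha> \<theta> lam b k) (b k))"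

definition coins :: "real \<Rightarrow> nat \<Rightarrow> (nat \<Rightarrow> bool) pmf" where
  "coins p T = Pi_pmf {..T} False (\<lambda>_. bernoulli_pmf p)"

definition Mavg :: "real \<Rightarrow> real \<Rightarrow> real \<Rightarrow> real \<Rightarrow> nat \<Rightarrow> real" where
  "Mavg \<alpha> \<theta> lam p T = measure_pmf.expectation (coins p T)
     (\<lambda>b. (\<Sum>k\<le>T. Vpost \<theta> lam (Vprior \<alpha> \<theta> lam b k) (b k)) / real (T + 1))"

definition Cavg :: "real \<Rightarrow> real \<Rightarrow> real \<Rightarrow> nat \<Rightarrow> real \<Rightarrow> real \<Rightarrow> nat \<Rightarrow> real" where
  "Cavg \<alpha> cTX \<phi> NS lam p T = measure_pmf.expectation (coins p T)
     (\<lambda>b. (\<Sum>k\<le>T. (1 / real NS) *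
        tk (\<phi> / cTX) lam (Vprior \<alpha> (\<phi> / cTX) lam b k) (b k) *
        (cTX + \<phi> * SM (\<phi> / cTX) lam (Vprior \<alpha> (\<phi> / cTX) lam b k) (b k))) / real (T + 1))"

end

theory Submission
  imports Defs
begin


fun ph :: "(nat \<Rightarrow> bool \<Rightarrow> nat) \<Rightarrow> (nat \<Rightarrow> bool) \<Rightarrow> nat \<Rightarrow> nat" where
  "ph nx b 0 = 0"
| "ph nx b (Suc k) = nx (ph nx b k) (b k)"

lemma ph_local: "(\<And>i. i < k \<Longrightarrow> b i = b' i) \<Longrightarrow> ph nx b k = ph nx b' k"
  by (induction k) auto

lemma ph_upd: "ph nx (b(k:=y)) k = ph nx b k"
  by (rule ph_local) auto

lemma fin_Pi: "finite A \<Longrightarrow> finite (set_pmf (Pi_pmf A False (\<lambda>_. bernoulli_pmf p)))"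
  by (subst set_Pi_pmf) auto

lemma pi_split:
  fixes Q :: "'x \<Rightarrow> bool \<Rightarrow> real"
  assumes A: "finite A" "k \<in> A" and p: "0 \<le> p" "p \<le> 1"
    and F: "\<And>b y. F (b(k:=y)) = F b"
  shows "measure_pmf.expectation (Pi_pmf A False (\<lambda>_. bernoulli_pmf p)) (\<lambda>b. Q (F b) (b k))
       = measure_pmf.expectation (Pi_pmf (A-{k}) False (\<lambda>_. bernoulli_pmf p))
           (\<lambda>b. p * Q (F b) True + (1-p) * Q (F b) False)"
proof -
  let ?P = "Pi_pmf (A-{k}) False (\<lambda>_. bernoulli_pmf p)"
  have fA: "finite (A - {k})" using A by auto
  have "A = insert k (A - {k})" using A by auto
  then have eq: "Pi_pmf A False (\<lambda>_. bernoulli_pmf p) =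
      bernoulli_pmf p \<bind> (\<lambda>y. map_pmf (\<lambda>f. f(k:=y)) ?P)"
    using Pi_pmf_insert'[OF fA, of k False "\<lambda>_. bernoulli_pmf p"]
    by (simp add: map_pmf_def)
  have fin: "finite (set_pmf (map_pmf (\<lambda>f. f(k:=y)) ?P))" for y
    using fin_Pi[OF fA] by simp
  have "measure_pmf.expectation (Pi_pmf A False (\<lambda>_. bernoulli_pmf p)) (\<lambda>b. Q (F b) (b k))
      = (\<Sum>y\<in>UNIV. pmf (bernoulli_pmf p) y *\<^sub>R
           measure_pmf.expectation (map_pmf (\<lambda>f. f(k:=y)) ?P) (\<lambda>b. Q (F b) (b k)))"
    unfolding eq by (rule pmf_expectation_bind) (use fin in auto)
  also have "\<dots> = p * measure_pmf.expectation ?P (\<lambda>b. Q (F b) True)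
        + (1-p) * measure_pmf.expectation ?P (\<lambda>b. Q (F b) False)"
    using p by (simp add: UNIV_bool F)
  also have "\<dots> = measure_pmf.expectation ?P (\<lambda>b. p * Q (F b) True + (1-p) * Q (F b) False)"
  proof -
    have int: "integrable ?P f" for f :: "_ \<Rightarrow> real"
      using integrable_measure_pmf_finite[OF fin_Pi[OF fA]] by blast
    show ?thesis by (simp add: Bochner_Integration.integral_add[OF int int])
  qed
  finally show ?thesis .
qed

lemma renewal:
  fixes gg :: "nat \<Rightarrow> bool \<Rightarrow> real" and hh :: "nat \<Rightarrow> real"
  assumes p: "0 \<le> p" "p \<le> 1" and S: "finite S" and inS: "\<And>b k. ph nx b k \<in> S"
    and pois: "\<And>m. m \<in> S \<Longrightarrow> p * (gg m True - c + hh (nx m True) - hh m)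
                  + (1-p) * (gg m False - c + hh (nx m False) - hh m) = 0"
  shows "(\<lambda>T. measure_pmf.expectation (coins p T)
            (\<lambda>b. (\<Sum>k\<le>T. gg (ph nx b k) (b k)) / real (T+1))) \<longlonglongrightarrow> c"
proof -
  define G where "G m y = gg m y - c + hh (nx m y) - hh m" for m y
  have tel: "(\<Sum>k\<le>T. gg (ph nx b k) (b k)) = real (T+1) * c + hh 0 - hh (ph nx b (Suc T))
        + (\<Sum>k\<le>T. G (ph nx b k) (b k))" for b T
    by (induction T) (auto simp: G_def algebra_simps)
  have int: "integrable (coins p T) f" for T and f :: "_ \<Rightarrow> real"
    unfolding coins_def by (rule integrable_measure_pmf_finite[OF fin_Pi]) auto
  have zero: "measure_pmf.expectation (coins p T) (\<lambda>b. G (ph nx b k) (b k)) = 0" if "k \<le> T" for k T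
  proof -
    have "measure_pmf.expectation (coins p T) (\<lambda>b. G (ph nx b k) (b k))
       = measure_pmf.expectation (Pi_pmf ({..T}-{k}) False (\<lambda>_. bernoulli_pmf p))
           (\<lambda>b. p * G (ph nx b k) True + (1-p) * G (ph nx b k) False)"
      unfolding coins_def
      by (rule pi_split[where F="\<lambda>b. ph nx b k" and Q=G]) (use that p ph_upd in auto)
    also have "\<dots> = 0"
      using pois[OF inS] by (simp add: G_def)
    finally show ?thesis .
  qed
  define e where "e T = measure_pmf.expectation (coins p T) (\<lambda>b. hh (ph nx b (Suc T)))" for T
  have eq: "measure_pmf.expectation (coins p T)
            (\<lambda>b. (\<Sum>k\<le>T. gg (ph nx b k) (b k)) / real (T+1)) = c + (hh 0 - e T) / real (T+1)" for T
  proof -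
    have "measure_pmf.expectation (coins p T)
            (\<lambda>b. (\<Sum>k\<le>T. gg (ph nx b k) (b k)) / real (T+1))
        = measure_pmf.expectation (coins p T)
            (\<lambda>b. real (T+1) * c + hh 0 - hh (ph nx b (Suc T))
        + (\<Sum>k\<le>T. G (ph nx b k) (b k))) / real (T+1)"
      by (simp add: tel)
    also have "measure_pmf.expectation (coins p T)
            (\<lambda>b. real (T+1) * c + hh 0 - hh (ph nx b (Suc T))
        + (\<Sum>k\<le>T. G (ph nx b k) (b k))) = real (T+1) * c + hh 0 - e T
        + (\<Sum>k\<le>T. measure_pmf.expectation (coins p T) (\<lambda>b. G (ph nx b k) (b k)))"
      unfolding e_def
      by (simp add: Bochner_Integration.integral_add[OF int int] Bochner_Integration.integral_diff[OF int int]
          Bochner_Integration.integral_sum[OF int])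
    also have "(\<Sum>k\<le>T. measure_pmf.expectation (coins p T) (\<lambda>b. G (ph nx b k) (b k))) = 0"
      using zero by simp
    finally show ?thesis by (simp add: field_simps)
  qed
  define H where "H = Max (abs ` hh ` S)"
  have hb: "\<bar>hh (ph nx b k)\<bar> \<le> H" for b k
    unfolding H_def using S inS[of b k] by (intro Max_ge) auto
  have eb: "\<bar>e T\<bar> \<le> H" for T
  proof -
    have "\<bar>e T\<bar> \<le> measure_pmf.expectation (coins p T) (\<lambda>b. \<bar>hh (ph nx b (Suc T))\<bar>)"
      unfolding e_def by (rule integral_abs_bound)
    also have "\<dots> \<le> measure_pmf.expectation (coins p T) (\<lambda>b. H)"
      by (rule integral_mono[OF int int]) (use hb[of _ "Suc T"] in simp)
    finally show ?thesis by simp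
  qed
  have "(\<lambda>T. (hh 0 - e T) / real (T+1)) \<longlonglongrightarrow> 0"
  proof (rule Lim_null_comparison)
    show "\<forall>\<^sub>F T in sequentially. norm ((hh 0 - e T) / real (T+1)) \<le> (\<bar>hh 0\<bar> + H) * inverse (real (Suc T))"
    proof (intro always_eventually allI)
      fix T
      have "\<bar>hh 0 - e T\<bar> \<le> \<bar>hh 0\<bar> + H" using eb[of T] by linarith
      then show "norm ((hh 0 - e T) / real (T+1)) \<le> (\<bar>hh 0\<bar> + H) * inverse (real (Suc T))"
        by (simp add: divide_simps)
    qed
    show "(\<lambda>T. (\<bar>hh 0\<bar> + H) * inverse (real (Suc T))) \<longlonglongrightarrow> 0"
      using tendsto_mult_right_zero[OF LIMSEQ_inverse_real_of_nat] by simp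
  qed
  then have "(\<lambda>T. c + (hh 0 - e T) / real (T+1)) \<longlonglongrightarrow> c + 0"
    by (intro tendsto_add tendsto_const)
  then have "(\<lambda>T. c + (hh 0 - e T) / real (T+1)) \<longlonglongrightarrow> c" by simp
  moreover have "(\<lambda>T. measure_pmf.expectation (coins p T)
            (\<lambda>b. (\<Sum>k\<le>T. gg (ph nx b k) (b k)) / real (T+1))) = (\<lambda>T. c + (hh 0 - e T) / real (T+1))"
    using eq by (rule ext)
  ultimately show ?thesis by simp
qed




lemma pieces_mono:
  assumes "0 \<le> \<theta>" "0 \<le> x" "x \<le> y"
  shows "sqrt (x*\<theta>) \<le> sqrt (y*\<theta>)"
    and "sqrt x * sqrt (sqrt (x*\<theta>) + x/4) \<le> sqrt y * sqrt (sqrt (y*\<theta>) + y/4)"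
proof -
  show 1: "sqrt (x*\<theta>) \<le> sqrt (y*\<theta>)" using assms by (simp add: mult_right_mono)
  have "sqrt (sqrt (x*\<theta>) + x/4) \<le> sqrt (sqrt (y*\<theta>) + y/4)"
    by (intro real_sqrt_le_mono add_mono 1) (use assms in auto)
  then show "sqrt x * sqrt (sqrt (x*\<theta>) + x/4) \<le> sqrt y * sqrt (sqrt (y*\<theta>) + y/4)"
    using assms by (intro mult_mono) auto
qed

lemma vth_mono:
  assumes "0 \<le> \<theta>" "0 \<le> x" "x < y"
  shows "vth \<theta> x < vth \<theta> y"
  using pieces_mono[OF assms(1,2), of y] assms unfolding vth_def by linarith

lemma eta_alt: "eta \<alpha> \<theta> j l = 1 - \<alpha>^j - (1-\<alpha>^j) * sqrt(l*\<theta>) - l/2 - sqrt l * sqrt(sqrt(l*\<theta>)+l/4)"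
  unfolding eta_def vth_def by (simp add: algebra_simps)

lemma eta_dec:
  assumes "0 \<le> \<alpha>" "\<alpha> \<le> 1" "0 \<le> \<theta>" "0 \<le> x" "x < y"
  shows "eta \<alpha> \<theta> j y < eta \<alpha> \<theta> j x"
proof -
  have a: "0 \<le> 1 - \<alpha>^j" using assms by (simp add: power_le_one)
  have "(1-\<alpha>^j) * sqrt(x*\<theta>) \<le> (1-\<alpha>^j) * sqrt(y*\<theta>)"
    using pieces_mono(1)[OF assms(3,4), of y] assms a by (intro mult_left_mono) auto
  then show ?thesis
    using pieces_mono(2)[OF assms(3,4), of y] assms unfolding eta_alt by linarith
qed

lemma vth_th:
  assumes "0 < \<theta>"
  shows "vth \<theta> (lam_th \<theta>) = 1"
proof -
  define t where "t = sqrt \<theta>"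
  have t: "0 < t" "1 + t \<noteq> 0" using assms by (auto simp: t_def add_nonneg_eq_0_iff)
  have l: "lam_th \<theta> = (1/(1+t))^2" unfolding lam_th_def t_def by (simp add: power_divide)
  have s1: "sqrt (lam_th \<theta>) = 1/(1+t)" unfolding l using t by simp
  have tt: "\<theta> = t*t" using assms by (simp add: t_def)
  have "lam_th \<theta> * \<theta> = (t/(1+t))^2" unfolding l using t by (simp add: tt power2_eq_square field_simps)
  then have s2: "sqrt (lam_th \<theta> * \<theta>) = t/(1+t)" using t by simp
  have u: "1 + t > 0" using t by simp
  have "t/(1+t) + lam_th \<theta>/4 = ((2*t+1)/(2*(1+t)))^2"
    unfolding l using u by (simp add: power2_eq_square divide_simps) (simp add: algebra_simps)
  then have s3: "sqrt (t/(1+t) + lam_th \<theta>/4) = (2*t+1)/(2*(1+t))" using t by simp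
  show ?thesis unfolding vth_def s1 s2 s3 unfolding l using u
    by (simp add: power2_eq_square divide_simps) (simp add: algebra_simps)
qed

lemma lam_th_pos: "0 < \<theta> \<Longrightarrow> 0 < lam_th \<theta>"
  unfolding lam_th_def by (simp add: add_pos_nonneg add_nonneg_eq_0_iff)

lemma lam_star_spec:
  assumes "0 \<le> \<alpha>" "\<alpha> < 1" "0 < \<theta>"
  shows "lam_star \<alpha> \<theta> j \<in> {0..lam_th \<theta>} \<and> eta \<alpha> \<theta> j (lam_star \<alpha> \<theta> j) = 0"
proof -
  let ?f = "eta \<alpha> \<theta> j"
  have "\<exists>l. l \<in> {0..lam_th \<theta>} \<and> ?f l = 0"
  proof -
    have c: "continuous_on {0..lam_th \<theta>} ?f"
      unfolding eta_def vth_def by (intro continuous_intros) auto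
    have f0: "0 \<le> ?f 0" unfolding eta_def vth_def using assms by (simp add: power_le_one)
    have "sqrt (lam_th \<theta> * \<theta>) \<le> vth \<theta> (lam_th \<theta>)"
      unfolding vth_def using lam_th_pos[OF assms(3)] assms by simp
    then have "sqrt (lam_th \<theta> * \<theta>) \<le> 1" using vth_th[OF assms(3)] by simp
    then have f1: "?f (lam_th \<theta>) \<le> 0"
      unfolding eta_def vth_th[OF assms(3)] using assms by simp
    show ?thesis using IVT2'[where f="eta \<alpha> \<theta> j" and a=0 and b="lam_th \<theta>" and y=0, OF f1 f0 _ c] lam_th_pos[OF assms(3)] by auto
  qed
  moreover have "l1 = l2" if "l1 \<in> {0..lam_th \<theta>} \<and> ?f l1 = 0" "l2 \<in> {0..lam_th \<theta>} \<and> ?f l2 = 0" for l1 l2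
    using eta_dec[of \<alpha> \<theta> l1 l2 j] eta_dec[of \<alpha> \<theta> l2 l1 j] that assms
    by (cases l1 l2 rule: linorder_cases) auto
  ultimately have "\<exists>!l. l \<in> {0..lam_th \<theta>} \<and> ?f l = 0" by blast
  then show ?thesis unfolding lam_star_def by (rule theI')
qed

lemma eta_neg:
  assumes "0 \<le> \<alpha>" "\<alpha> < 1" "0 < \<theta>" "lam_star \<alpha> \<theta> j < l"
  shows "eta \<alpha> \<theta> j l < 0"
  using lam_star_spec[OF assms(1-3), of j] eta_dec[of \<alpha> \<theta> "lam_star \<alpha> \<theta> j" l j] assms by auto

lemma eta_pos:
  assumes "0 \<le> \<alpha>" "\<alpha> < 1" "0 < \<theta>" "l < lam_star \<alpha> \<theta> j" "0 \<le> l"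
  shows "eta \<alpha> \<theta> j l > 0"
  using lam_star_spec[OF assms(1-3), of j] eta_dec[of \<alpha> \<theta> l "lam_star \<alpha> \<theta> j" j] assms by auto




lemma pc:
  fixes gg :: "nat \<Rightarrow> bool \<Rightarrow> real"
  assumes "\<And>y. gg m y = gz" "\<And>y. nx m y = nz" "gz - c + hh nz - hh m = 0"
  shows "p * (gg m True - c + hh (nx m True) - hh m) + (1-p) * (gg m False - c + hh (nx m False) - hh m) = 0"
  using assms by simp

theorem theorem2:
  fixes \<alpha> cTX \<phi> \<theta> lam p0 :: real and NS B J :: nat
  assumes "0 \<le> \<alpha>" "\<alpha> < 1" "cTX > 0" "\<phi> > 0" "\<theta> = \<phi> / cTX"
    and "B \<ge> 1" "NS \<ge> B"
    and "0 < lam" "lam < lam_th \<theta>"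
    and "0 \<le> p0" "p0 \<le> 1"
    and "J \<ge> 1"
    and "lam_star \<alpha> \<theta> (J - 1) < lam" "lam \<le> lam_star \<alpha> \<theta> J"
  shows
   "(lam = lam_star \<alpha> \<theta> J \<longrightarrow>
      (Mavg \<alpha> \<theta> lam p0 \<longlonglongrightarrow>
         1 - (1 - \<alpha>^J * (1 - (1 - \<alpha>) * (1 - p0))) * (1 - sqrt (lam * \<theta>))
             / ((real J + 1 - p0) * (1 - \<alpha>)))
    \<and> (Cavg \<alpha> cTX \<phi> NS lam p0 \<longlonglongrightarrow>
         1 / (real NS * (real J + 1 - p0)) *
         (cTX + \<phi> * (1 - sqrt (lam * \<theta>)) / sqrt (lam * \<theta>) *
           (p0 * (1 - \<alpha>^J) / (1 - \<alpha>^J * (1 - sqrt (lam * \<theta>)))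
            + (1 - p0) * (1 - \<alpha>^(J+1)) / (1 - \<alpha>^(J+1) * (1 - sqrt (lam * \<theta>)))))))
  \<and> (lam < lam_star \<alpha> \<theta> J \<longrightarrow>
      (Mavg \<alpha> \<theta> lam p0 \<longlonglongrightarrow>
         1 - (1 - \<alpha>^J) * (1 - sqrt (lam * \<theta>)) / (real J * (1 - \<alpha>)))
    \<and> (Cavg \<alpha> cTX \<phi> NS lam p0 \<longlonglongrightarrow>
         1 / (real NS * real J) *
         (cTX + \<phi> * (1 / sqrt (lam * \<theta>)) *
           ((1 - \<alpha>^J) * (1 - sqrt (lam * \<theta>)) / (1 - \<alpha>^J * (1 - sqrt (lam * \<theta>)))))))"
proof -
  have th: "0 < \<theta>" using assms by simp
  define s where "s = sqrt (lam*\<theta>)"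
  define v where "v = vth \<theta> lam"
  have s0: "0 < s" unfolding s_def using th assms by simp
  have vs: "s < v" unfolding v_def vth_def s_def[symmetric] using assms s0 by (simp add: add_pos_nonneg)
  have v1: "v < 1" unfolding v_def using vth_mono[of \<theta> lam "lam_th \<theta>"] vth_th[OF th] assms th by simp
  have s1: "s < 1" using vs v1 by simp
  have aJ: "\<alpha>^m \<le> 1" for m using assms by (simp add: power_le_one)
  define xval where "xval m = (if m = 0 then 1 else 1 - \<alpha>^m*(1-s))" for m :: nat
  have xge: "s \<le> xval m" for m
  proof -
    have h: "\<alpha>^m*(1-s) \<le> 1*(1-s)" using aJ[of m] s1 by (intro mult_right_mono) auto
    show ?thesis unfolding xval_def using h s1 by (smt (verit))
  qed
  have xpos: "0 < xval m" for m using xge[of m] s0 by simp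
  have xeta: "xval m - v = eta \<alpha> \<theta> m lam" if "m \<ge> 1" for m
    using that unfolding xval_def eta_def s_def v_def by simp
  define nx where "nx m y = (if active \<theta> lam (xval m) y then 1 else Suc m)" for m y
  have nxA: "nx m y = 1" if "active \<theta> lam (xval m) y" for m y using that by (simp add: nx_def)
  have nxI: "nx m y = Suc m" if "\<not> active \<theta> lam (xval m) y" for m y using that by (simp add: nx_def)
  have act0: "active \<theta> lam (xval 0) y" for y
    unfolding active_def xval_def v_def[symmetric] using v1 by simp
  have vpa: "Vpost \<theta> lam V y = s" if "active \<theta> lam V y" "0 < V" for V y
    using that s0 unfolding Vpost_def tk_def SM_def s_def[symmetric] by (simp add: field_simps)
  have vpi: "Vpost \<theta> lam V y = V" if "\<not> active \<theta> lam V y" for V y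
    using that unfolding Vpost_def tk_def SM_def by simp
  have vp: "Vprior \<alpha> \<theta> lam b k = xval (ph nx b k)" for b k
  proof (induction k)
    case 0 then show ?case by (simp add: xval_def)
  next
    case (Suc k)
    show ?case
    proof (cases "active \<theta> lam (xval (ph nx b k)) (b k)")
      case True
      have "ph nx b (Suc k) = 1" using True by (simp add: nx_def)
      moreover have "Vprior \<alpha> \<theta> lam b (Suc k) = 1 - \<alpha> * (1 - s)"
        using Suc vpa[OF True xpos] by simp
      ultimately show ?thesis by (simp add: xval_def)
    next
      case False
      then have ne: "ph nx b k \<noteq> 0" using act0 by metis
      have "ph nx b (Suc k) = Suc (ph nx b k)" using False by (simp add: nx_def)
      moreover have "Vprior \<alpha> \<theta> lam b (Suc k) = 1 - \<alpha> * (1 - xval (ph nx b k))"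
        using Suc vpi[OF False] by simp
      ultimately show ?thesis using ne by (simp add: xval_def algebra_simps)
    qed
  qed
  have inact: "\<not> active \<theta> lam (xval m) y" if "1 \<le> m" "m < J" for m y
  proof -
    have "eta \<alpha> \<theta> (J-1) lam < 0" using eta_neg[OF assms(1,2) th assms(13)] .
    moreover have "1 \<le> J - 1" using that by simp
    ultimately have "xval (J-1) < v" using xeta[of "J-1"] by simp
    moreover have "xval m \<le> xval (J-1)"
    proof -
      have "\<alpha>^(J-1) \<le> \<alpha>^m" using assms that by (intro power_decreasing) auto
      then have h: "\<alpha>^(J-1)*(1-s) \<le> \<alpha>^m*(1-s)" using s1 by (intro mult_right_mono) auto
      have "xval m = 1 - \<alpha>^m*(1-s)" "xval (J-1) = 1 - \<alpha>^(J-1)*(1-s)"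
        using that by (auto simp: xval_def)
      then show ?thesis using h by linarith
    qed
    ultimately show ?thesis unfolding active_def v_def[symmetric] by auto
  qed
  have xJ: "v \<le> xval J"
  proof (cases "lam = lam_star \<alpha> \<theta> J")
    case True
    then show ?thesis using lam_star_spec[OF assms(1,2) th, of J] xeta[of J] assms by simp
  next
    case False
    then show ?thesis using eta_pos[OF assms(1,2) th, of lam J] xeta[of J] assms by simp
  qed
  have NS0: "real NS > 0" using assms by simp
  have q1: "1 - \<alpha>^m * (1-s) > 0" for m
  proof -
    have h: "\<alpha>^m*(1-s) \<le> 1-s" using mult_right_mono[OF aJ[of m], of "1-s"] s1 by simp
    show ?thesis using h s0 by linarith
  qed
  have a1: "1 - \<alpha> \<noteq> 0" using assms by simp
  have J0: "real J \<noteq> 0" using assms by simp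
  have Cavg_eq: "Cavg \<alpha> cTX \<phi> NS lam p0 = (\<lambda>T. measure_pmf.expectation (coins p0 T)
     (\<lambda>b. (\<Sum>k\<le>T. (\<lambda>m y. (1 / real NS) * tk \<theta> lam (xval m) y * (cTX + \<phi> * SM \<theta> lam (xval m) y))
        (ph nx b k) (b k)) / real (T + 1)))"
    by (rule ext) (simp add: Cavg_def assms(5)[symmetric] vp)
  have Mavg_eq: "Mavg \<alpha> \<theta> lam p0 = (\<lambda>T. measure_pmf.expectation (coins p0 T)
     (\<lambda>b. (\<Sum>k\<le>T. (\<lambda>m y. Vpost \<theta> lam (xval m) y) (ph nx b k) (b k)) / real (T + 1)))"
    by (rule ext) (simp add: Mavg_def vp)
  have tkA: "tk \<theta> lam V y = 1" "SM \<theta> lam V y = 1/s - 1/V" if "active \<theta> lam V y" for V y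
    using that unfolding tk_def SM_def s_def by auto
  have tkI: "tk \<theta> lam V y = 0" if "\<not> active \<theta> lam V y" for V y
    using that unfolding tk_def by auto
  have caseii: "lam < lam_star \<alpha> \<theta> J \<longrightarrow>
      (Mavg \<alpha> \<theta> lam p0 \<longlonglongrightarrow>
         1 - (1 - \<alpha>^J) * (1 - sqrt (lam * \<theta>)) / (real J * (1 - \<alpha>)))
    \<and> (Cavg \<alpha> cTX \<phi> NS lam p0 \<longlonglongrightarrow>
         1 / (real NS * real J) *
         (cTX + \<phi> * (1 / sqrt (lam * \<theta>)) *
           ((1 - \<alpha>^J) * (1 - sqrt (lam * \<theta>)) / (1 - \<alpha>^J * (1 - sqrt (lam * \<theta>))))))"
  proof
    assume lt: "lam < lam_star \<alpha> \<theta> J"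
    have "v < xval J" using eta_pos[OF assms(1,2) th lt] xeta[of J] assms by simp
    then have actJ: "active \<theta> lam (xval J) y" for y unfolding active_def v_def by simp
    have phS: "ph nx b k \<in> {..J}" for b k
    proof (induction k)
      case 0 then show ?case by simp
    next
      case (Suc k)
      consider "ph nx b k = 0" | "1 \<le> ph nx b k \<and> ph nx b k < J" | "ph nx b k = J" using Suc by force
      then show ?case
        by cases (use nxA[OF act0] nxI[OF inact] nxA[OF actJ] assms in auto)
    qed
    define c where "c = 1 - (1 - \<alpha>^J) * (1 - s) / (real J * (1 - \<alpha>))"
    define hh where "hh m = (if m = 0 then s - c else (real m - 1)*(c-1) + (1-s)*(\<alpha> - \<alpha>^m)/(1-\<alpha>))" for m :: nat
    have M: "Mavg \<alpha> \<theta> lam p0 \<longlonglongrightarrow> c"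
      unfolding Mavg_eq
    proof (rule renewal[where S="{..J}" and hh=hh])
      fix m assume m: "m \<in> {..J}"
      consider "m = 0" | "1 \<le> m \<and> m < J" | "m = J" using m by force
      then show "p0 * (Vpost \<theta> lam (xval m) True - c + hh (nx m True) - hh m) +
         (1 - p0) * (Vpost \<theta> lam (xval m) False - c + hh (nx m False) - hh m) = 0"
      proof cases
        case 1
        show ?thesis by (rule pc[where gz=s and nz=1]) (use 1 act0 vpa xpos nxA in \<open>auto simp: hh_def\<close>)
      next
        case 2
        show ?thesis
        proof (rule pc[where gz="xval m" and nz="Suc m"])
          show "xval m - c + hh (Suc m) - hh m = 0"
            using 2 a1 unfolding hh_def xval_def by (simp add: field_simps)
        qed (use 2 inact vpi nxI in auto)
      next
        case 3
        show ?thesis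
        proof (rule pc[where gz=s and nz=1])
          have e1: "real J * (c - 1) = -((1-\<alpha>^J)*(1-s)/(1-\<alpha>))"
            unfolding c_def using J0 a1 by (simp add: divide_simps)
          have e2: "(1-\<alpha>^J)*(1-s)/(1-\<alpha>) - (1-s)*(\<alpha>-\<alpha>^J)/(1-\<alpha>) = 1 - s"
            using a1 by (simp add: divide_simps) (simp add: algebra_simps)
          have e3: "(real J - 1)*(c-1) = real J*(c-1) - (c-1)" by (simp add: algebra_simps)
          have "hh m = (real J - 1)*(c-1) + (1-s)*(\<alpha> - \<alpha>^J)/(1-\<alpha>)" "hh 1 = 0"
            using 3 assms(12) by (auto simp: hh_def)
          then show "s - c + hh 1 - hh m = 0" using e1 e2 e3 by linarith
        qed (use 3 actJ vpa xpos nxA in auto)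
      qed
    qed (use assms phS in auto)
    show "(Mavg \<alpha> \<theta> lam p0 \<longlonglongrightarrow>
         1 - (1 - \<alpha>^J) * (1 - sqrt (lam * \<theta>)) / (real J * (1 - \<alpha>)))
    \<and> (Cavg \<alpha> cTX \<phi> NS lam p0 \<longlonglongrightarrow>
         1 / (real NS * real J) *
         (cTX + \<phi> * (1 / sqrt (lam * \<theta>)) *
           ((1 - \<alpha>^J) * (1 - sqrt (lam * \<theta>)) / (1 - \<alpha>^J * (1 - sqrt (lam * \<theta>))))))"
    proof
      show "Mavg \<alpha> \<theta> lam p0 \<longlonglongrightarrow>
         1 - (1 - \<alpha>^J) * (1 - sqrt (lam * \<theta>)) / (real J * (1 - \<alpha>))"
        using M unfolding c_def s_def .
    next
      define gC where "gC m y = (1 / real NS) * tk \<theta> lam (xval m) y * (cTX + \<phi> * SM \<theta> lam (xval m) y)" for m y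
      define cC where "cC = 1 / (real NS * real J) *
         (cTX + \<phi> * (1 / s) * ((1 - \<alpha>^J) * (1 - s) / (1 - \<alpha>^J * (1 - s))))"
      define gA where "gA m = (1 / real NS) * (cTX + \<phi> * (1/s - 1/xval m))" for m
      have gCA: "gC m y = gA m" if "active \<theta> lam (xval m) y" for m y
        using tkA[OF that] unfolding gC_def gA_def by simp
      have gCI: "gC m y = 0" if "\<not> active \<theta> lam (xval m) y" for m y
        using tkI[OF that] unfolding gC_def by simp
      define hh where "hh m = (if m = 0 then gA 0 - cC else (real m - 1)*cC)" for m :: nat
      have C: "Cavg \<alpha> cTX \<phi> NS lam p0 \<longlonglongrightarrow> cC"
        unfolding Cavg_eq gC_def[symmetric]
      proof (rule renewal[where S="{..J}" and hh=hh])
        fix m assume m: "m \<in> {..J}"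
        consider "m = 0" | "1 \<le> m \<and> m < J" | "m = J" using m by force
        then show "p0 * (gC m True - cC + hh (nx m True) - hh m) +
           (1 - p0) * (gC m False - cC + hh (nx m False) - hh m) = 0"
        proof cases
          case 1
          show ?thesis by (rule pc[where gz="gA 0" and nz=1]) (use 1 act0 gCA nxA in \<open>auto simp: hh_def\<close>)
        next
          case 2
          show ?thesis
          proof (rule pc[where gz=0 and nz="Suc m"])
            show "0 - cC + hh (Suc m) - hh m = 0"
              using 2 unfolding hh_def by (simp add: algebra_simps)
          qed (use 2 inact gCI nxI in auto)
        next
          case 3
          show ?thesis
          proof (rule pc[where gz="gA J" and nz=1])
            have xJv: "xval J = 1 - \<alpha>^J*(1-s)" using assms(12) by (simp add: xval_def)
            have e: "(1/s) * ((1 - \<alpha>^J) * (1 - s) / (1 - \<alpha>^J * (1 - s))) = 1/s - 1/(1 - \<alpha>^J*(1-s))"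
              using s0 q1[of J] by (simp add: divide_simps) (simp add: algebra_simps)
            have "real J * cC = gA J"
              unfolding cC_def gA_def xJv using J0 NS0 e by (simp add: divide_simps)
            moreover have "hh m = (real J - 1)*cC" "hh 1 = 0"
              using 3 assms(12) by (auto simp: hh_def)
            ultimately show "gA J - cC + hh 1 - hh m = 0" by (simp add: algebra_simps)
          qed (use 3 actJ gCA nxA in auto)
        qed
      qed (use assms phS in auto)
      show "Cavg \<alpha> cTX \<phi> NS lam p0 \<longlonglongrightarrow>
         1 / (real NS * real J) *
         (cTX + \<phi> * (1 / sqrt (lam * \<theta>)) *
           ((1 - \<alpha>^J) * (1 - sqrt (lam * \<theta>)) / (1 - \<alpha>^J * (1 - sqrt (lam * \<theta>)))))"
        using C unfolding cC_def s_def .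
    qed
  qed
  have casei: "lam = lam_star \<alpha> \<theta> J \<longrightarrow>
      (Mavg \<alpha> \<theta> lam p0 \<longlonglongrightarrow>
         1 - (1 - \<alpha>^J * (1 - (1 - \<alpha>) * (1 - p0))) * (1 - sqrt (lam * \<theta>))
             / ((real J + 1 - p0) * (1 - \<alpha>)))
    \<and> (Cavg \<alpha> cTX \<phi> NS lam p0 \<longlonglongrightarrow>
         1 / (real NS * (real J + 1 - p0)) *
         (cTX + \<phi> * (1 - sqrt (lam * \<theta>)) / sqrt (lam * \<theta>) *
           (p0 * (1 - \<alpha>^J) / (1 - \<alpha>^J * (1 - sqrt (lam * \<theta>)))
            + (1 - p0) * (1 - \<alpha>^(J+1)) / (1 - \<alpha>^(J+1) * (1 - sqrt (lam * \<theta>))))))"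
  proof
    assume eq: "lam = lam_star \<alpha> \<theta> J"
    have xJv: "xval J = v" using lam_star_spec[OF assms(1,2) th, of J] xeta[of J] assms eq by simp
    then have actJ: "active \<theta> lam (xval J) y = y" for y unfolding active_def v_def by simp
    have xJq: "xval J = 1 - \<alpha>^J*(1-s)" using assms(12) by (simp add: xval_def)
    have apos: "0 < \<alpha>"
    proof (rule ccontr)
      assume "\<not> 0 < \<alpha>"
      then have "\<alpha> = 0" using assms by simp
      then have "xval J = 1" using xJq assms(12) by simp
      then show False using xJv v1 by simp
    qed
    have "\<alpha>^(J+1) < \<alpha>^J" using apos assms by simp
    then have "\<alpha>^(J+1)*(1-s) < \<alpha>^J*(1-s)" using s1 by (intro mult_strict_right_mono) auto
    then have "xval J < xval (J+1)" unfolding xJq by (simp add: xval_def)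
    then have actJ1: "active \<theta> lam (xval (J+1)) y" for y unfolding active_def v_def[symmetric] xJv by simp
    have phS: "ph nx b k \<in> {..J+1}" for b k
    proof (induction k)
      case 0 then show ?case by simp
    next
      case (Suc k)
      consider "ph nx b k = 0" | "1 \<le> ph nx b k \<and> ph nx b k < J" | "ph nx b k = J" | "ph nx b k = J+1"
        using Suc by force
      then show ?case
      proof cases
        case 3
        then show ?thesis using nxA[of J "b k"] nxI[of J "b k"] actJ by (cases "b k") auto
      qed (use nxA[OF act0] nxI[OF inact] nxA[OF actJ1] assms in auto)
    qed
    have K0: "real J + 1 - p0 > 0" using assms by simp
    define q where "q = \<alpha>^J"
    have q2: "\<alpha>^(J+1) = \<alpha> * q" unfolding q_def by simp
    define c where "c = 1 - (1 - \<alpha>^J * (1 - (1 - \<alpha>) * (1 - p0))) * (1 - s) / ((real J + 1 - p0) * (1 - \<alpha>))"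
    define hh where "hh m = (if m = 0 \<or> m = J+1 then s - c else (real m - 1)*(c-1) + (1-s)*(\<alpha> - \<alpha>^m)/(1-\<alpha>))" for m :: nat
    have M: "Mavg \<alpha> \<theta> lam p0 \<longlonglongrightarrow> c"
      unfolding Mavg_eq
    proof (rule renewal[where S="{..J+1}" and hh=hh])
      fix m assume m: "m \<in> {..J+1}"
      consider "m = 0" | "1 \<le> m \<and> m < J" | "m = J" | "m = J+1" using m by force
      then show "p0 * (Vpost \<theta> lam (xval m) True - c + hh (nx m True) - hh m) +
         (1 - p0) * (Vpost \<theta> lam (xval m) False - c + hh (nx m False) - hh m) = 0"
      proof cases
        case 1
        show ?thesis by (rule pc[where gz=s and nz=1]) (use 1 act0 vpa xpos nxA assms in \<open>auto simp: hh_def\<close>)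
      next
        case 2
        show ?thesis
        proof (rule pc[where gz="xval m" and nz="Suc m"])
          show "xval m - c + hh (Suc m) - hh m = 0"
            using 2 a1 unfolding hh_def xval_def by (simp add: field_simps)
        qed (use 2 inact vpi nxI in auto)
      next
        case 4
        show ?thesis by (rule pc[where gz=s and nz=1]) (use 4 actJ1 vpa xpos nxA assms in \<open>auto simp: hh_def\<close>)
      next
        case 3
        define r where "r = (1-s)/(1-\<alpha>)"
        define t where "t = c - 1"
        have sr: "1 - s = r*(1-\<alpha>)" unfolding r_def using a1 by simp
        have Kt: "(real J + 1 - p0)*t = -r*(1 - q*(1 - (1-\<alpha>)*(1-p0)))"
          unfolding t_def c_def r_def q_def using K0 a1 by (simp add: divide_simps)
        have hJ: "hh J = (real J - 1)*t + r*(\<alpha> - q)"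
          using assms(12) unfolding hh_def t_def r_def q_def by simp
        have h1: "hh 1 = 0" "hh (J+1) = s - c" using assms(12) by (auto simp: hh_def)
        have vT: "Vpost \<theta> lam (xval J) True = s" using vpa actJ xpos by simp
        have vF: "Vpost \<theta> lam (xval J) False = 1 - q*(1-s)" using vpi actJ xJq q_def by simp
        have nT: "nx J True = 1" "nx J False = J+1" using nxA nxI actJ by auto
        have "p0*(s - c + 0 - ((real J - 1)*t + r*(\<alpha> - q))) + (1-p0)*(1 - q*(1-s) - c + (s-c) - ((real J - 1)*t + r*(\<alpha> - q))) = 0"
          using sr Kt unfolding t_def by algebra
        then show ?thesis using 3 vT vF nT h1 hJ by simp
      qed
    qed (use assms phS in auto)
    show "(Mavg \<alpha> \<theta> lam p0 \<longlonglongrightarrow>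
         1 - (1 - \<alpha>^J * (1 - (1 - \<alpha>) * (1 - p0))) * (1 - sqrt (lam * \<theta>))
             / ((real J + 1 - p0) * (1 - \<alpha>)))
    \<and> (Cavg \<alpha> cTX \<phi> NS lam p0 \<longlonglongrightarrow>
         1 / (real NS * (real J + 1 - p0)) *
         (cTX + \<phi> * (1 - sqrt (lam * \<theta>)) / sqrt (lam * \<theta>) *
           (p0 * (1 - \<alpha>^J) / (1 - \<alpha>^J * (1 - sqrt (lam * \<theta>)))
            + (1 - p0) * (1 - \<alpha>^(J+1)) / (1 - \<alpha>^(J+1) * (1 - sqrt (lam * \<theta>))))))"
    proof
      show "Mavg \<alpha> \<theta> lam p0 \<longlonglongrightarrow>
         1 - (1 - \<alpha>^J * (1 - (1 - \<alpha>) * (1 - p0))) * (1 - sqrt (lam * \<theta>))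
             / ((real J + 1 - p0) * (1 - \<alpha>))"
        using M unfolding c_def s_def .
    next
      show "Cavg \<alpha> cTX \<phi> NS lam p0 \<longlonglongrightarrow>
         1 / (real NS * (real J + 1 - p0)) *
         (cTX + \<phi> * (1 - sqrt (lam * \<theta>)) / sqrt (lam * \<theta>) *
           (p0 * (1 - \<alpha>^J) / (1 - \<alpha>^J * (1 - sqrt (lam * \<theta>)))
            + (1 - p0) * (1 - \<alpha>^(J+1)) / (1 - \<alpha>^(J+1) * (1 - sqrt (lam * \<theta>)))))"
      proof -
      define gC where "gC m y = (1 / real NS) * tk \<theta> lam (xval m) y * (cTX + \<phi> * SM \<theta> lam (xval m) y)" for m y
      define cC where "cC = 1 / (real NS * (real J + 1 - p0)) *
         (cTX + \<phi> * (1 - s) / s *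
           (p0 * (1 - \<alpha>^J) / (1 - \<alpha>^J * (1 - s))
            + (1 - p0) * (1 - \<alpha>^(J+1)) / (1 - \<alpha>^(J+1) * (1 - s))))"
      define gA where "gA m = (1 / real NS) * (cTX + \<phi> * (1/s - 1/xval m))" for m
      have gCA: "gC m y = gA m" if "active \<theta> lam (xval m) y" for m y
        using tkA[OF that] unfolding gC_def gA_def by simp
      have gCI: "gC m y = 0" if "\<not> active \<theta> lam (xval m) y" for m y
        using tkI[OF that] unfolding gC_def by simp
      define hh where "hh m = (if m = 0 then gA 0 - cC else if m = J+1 then gA (J+1) - cC else (real m - 1)*cC)" for m :: nat
      have C: "Cavg \<alpha> cTX \<phi> NS lam p0 \<longlonglongrightarrow> cC"
        unfolding Cavg_eq gC_def[symmetric]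
      proof (rule renewal[where S="{..J+1}" and hh=hh])
        fix m assume m: "m \<in> {..J+1}"
        consider "m = 0" | "1 \<le> m \<and> m < J" | "m = J" | "m = J+1" using m by force
        then show "p0 * (gC m True - cC + hh (nx m True) - hh m) +
           (1 - p0) * (gC m False - cC + hh (nx m False) - hh m) = 0"
        proof cases
          case 1
          show ?thesis by (rule pc[where gz="gA 0" and nz=1]) (use 1 act0 gCA nxA assms in \<open>auto simp: hh_def\<close>)
        next
          case 2
          show ?thesis
          proof (rule pc[where gz=0 and nz="Suc m"])
            show "0 - cC + hh (Suc m) - hh m = 0"
              using 2 unfolding hh_def by (simp add: algebra_simps)
          qed (use 2 inact gCI nxI in auto)
        next
          case 4
          show ?thesis by (rule pc[where gz="gA (J+1)" and nz=1]) (use 4 actJ1 gCA nxA assms in \<open>auto simp: hh_def\<close>)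
        next
          case 3
          define X where "X = 1 - q*(1-s)"
          define Y where "Y = 1 - \<alpha>*q*(1-s)"
          have X0: "X > 0" using q1[of J] unfolding X_def q_def .
          have Y0: "Y > 0" using q1[of "J+1"] unfolding Y_def q_def by simp
          have xJ1: "xval (J+1) = Y" unfolding Y_def q_def by (simp add: xval_def)
          have xJ2: "xval J = X" unfolding X_def q_def using xJq .
          have KC: "(real J + 1 - p0) * cC = p0 * gA J + (1 - p0) * gA (J+1)"
          proof -
            have "(real J + 1 - p0) * cC = (1 / real NS) * (cTX + \<phi> * (1 - s) / s *
               (p0 * (1 - q) / X + (1 - p0) * (1 - \<alpha>*q) / Y))"
              unfolding cC_def X_def Y_def q2[unfolded q_def] q_def using K0 by simp
            also have "\<phi> * (1 - s) / s * (p0 * (1 - q) / X + (1 - p0) * (1 - \<alpha>*q) / Y)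
                = \<phi> * (p0 * (1/s - 1/X) + (1-p0) * (1/s - 1/Y))"
              unfolding X_def Y_def using s0 X0 Y0 unfolding X_def Y_def
              by (simp add: divide_simps) (simp add: algebra_simps)
            finally have "(real J + 1 - p0) * cC = 1 / real NS * (cTX + \<phi> * (p0 * (1 / s - 1 / X) + (1 - p0) * (1 / s - 1 / Y)))" .
            then show ?thesis unfolding gA_def xJ1 xJ2 by (simp add: divide_inverse algebra_simps)
          qed
          have h1: "hh 1 = 0" "hh (J+1) = gA (J+1) - cC" "hh J = (real J - 1)*cC"
            using assms(12) by (auto simp: hh_def)
          have gT: "gC J True = gA J" "gC J False = 0" using gCA gCI actJ by auto
          have nT: "nx J True = 1" "nx J False = J+1" using nxA nxI actJ by auto
          have "p0 * (gA J - cC + 0 - (real J - 1)*cC) + (1 - p0) * (0 - cC + (gA (J+1) - cC) - (real J - 1)*cC) = 0"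
            using KC by algebra
          then show ?thesis using 3 h1 gT nT by simp
        qed
      qed (use assms phS in auto)
      then show ?thesis unfolding cC_def s_def .
      qed
    qed
  qed
  show ?thesis using casei caseii by blast
qed


end
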